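(* Let $V_1,V_2$ be finite-dimensional Euclidean vector spaces and let $F\in\Lambda^2(V_1\oplus V_2)\cong\mathfrak{so}(V_1\oplus V_2)$ be a nonzero 2-form which vanishes on $V_1\wedge V_1$ and on $V_2\wedge V_2$ (i.e. $F\in V_1\otimes V_2\subset\Lambda^2(V_1\oplus V_2)$). Let $\mathfrak{g}\subset\Lambda^2(V_1\oplus V_2)$ be the Lie algebra generated by the brackets $[F,X\wedge Y]$ with $X\in V_1$, $Y\in V_2$. Then $$\mathfrak{g}=\mathfrak{so}(V_1)\oplus\mathfrak{so}(V_2),$$ unless $\dim V_1=\dim V_2=2$.
   Context: 2-forms on the Euclidean space $V=V_1\oplus V_2$ (orthogonal sum) are identified with skew-symmetric endomorphisms via $(X\wedge Y)(Z)=\langle X,Z\rangle Y-\langle Y,Z\rangle X$, and the bracket is the commutator of endomorphisms. $\mathfrak{so}(V_1)\oplus\mathfrak{so}(V_2)$ denotes the subalgebra $\Lambda^2V_1\oplus\Lambda^2V_2\subset\Lambda^2(V_1\oplus V_2)$. *)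

theory Defs
  imports "HOL-Analysis.Analysis"
begin

text \<open>The Euclidean space V = V1 (+) V2 is modelled as real^('n + 'm) with the standard
inner product; V1 is the span of the Inl-coordinates, V2 that of the Inr-coordinates
(an orthogonal sum). 2-forms are skew-symmetric endomorphisms, represented as matrices.\<close>

definition V1 :: "(real ^ ('n::finite + 'm::finite)) set" where
  "V1 = {x. \<forall>i. x $ Inr i = 0}"

definition V2 :: "(real ^ ('n::finite + 'm::finite)) set" where
  "V2 = {x. \<forall>i. x $ Inl i = 0}"

text \<open>(X wedge Y)(Z) = <X,Z> Y - <Y,Z> X, as a matrix.\<close>
definition wedge :: "real ^ 'k \<Rightarrow> real ^ 'k \<Rightarrow> real ^ 'k ^ 'k" where
  "wedge X Y = (\<chi> i j. Y $ i * X $ j - X $ i * Y $ j)"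

definition skew :: "real ^ 'k ^ 'k \<Rightarrow> bool" where
  "skew A \<longleftrightarrow> transpose A = - A"

definition lie_bracket :: "real ^ 'k ^ 'k \<Rightarrow> real ^ 'k ^ 'k \<Rightarrow> real ^ 'k ^ 'k" where
  "lie_bracket A B = A ** B - B ** A"

definition lie_closed :: "(real ^ 'k ^ 'k) set \<Rightarrow> bool" where
  "lie_closed L \<longleftrightarrow> (\<forall>A\<in>L. \<forall>B\<in>L. lie_bracket A B \<in> L)"

definition lie_generated :: "(real ^ 'k ^ 'k) set \<Rightarrow> (real ^ 'k ^ 'k) set" where
  "lie_generated S = \<Inter>{L. subspace L \<and> lie_closed L \<and> S \<subseteq> L}"

text \<open>so(V1) (+) so(V2) = Lambda^2 V1 (+) Lambda^2 V2 inside Lambda^2 (V1 (+) V2).\<close>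
definition so_sum :: "(real ^ ('n::finite + 'm::finite) ^ ('n + 'm)) set" where
  "so_sum = span ({wedge X Y | X Y. X \<in> V1 \<and> Y \<in> V1} \<union> {wedge X Y | X Y. X \<in> V2 \<and> Y \<in> V2})"

end

theory Submission
  imports Defs
begin


lemma wedge_apply: "wedge a b *v v = (a \<bullet> v) *\<^sub>R b - (b \<bullet> v) *\<^sub>R a"
  by (simp add: vec_eq_iff wedge_def matrix_vector_mult_def inner_vec_def sum_subtractf
      sum_distrib_left sum_distrib_right algebra_simps)

lemma wedge_add1: "wedge (a + b) c = wedge a c + wedge b c"
  by (simp add: vec_eq_iff wedge_def algebra_simps)
lemma wedge_add2: "wedge a (b + c) = wedge a b + wedge a c"
  by (simp add: vec_eq_iff wedge_def algebra_simps)
lemma wedge_diff1: "wedge (a - b) c = wedge a c - wedge b c"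
  by (simp add: vec_eq_iff wedge_def algebra_simps)
lemma wedge_diff2: "wedge a (b - c) = wedge a b - wedge a c"
  by (simp add: vec_eq_iff wedge_def algebra_simps)
lemma wedge_scale1: "wedge (r *\<^sub>R a) b = r *\<^sub>R wedge a b"
  by (simp add: vec_eq_iff wedge_def algebra_simps)
lemma wedge_scale2: "wedge a (r *\<^sub>R b) = r *\<^sub>R wedge a b"
  by (simp add: vec_eq_iff wedge_def algebra_simps)
lemma wedge_neg1: "wedge (- a) b = - wedge a b"
  by (simp add: vec_eq_iff wedge_def algebra_simps)
lemma wedge_neg2: "wedge a (- b) = - wedge a b"
  by (simp add: vec_eq_iff wedge_def algebra_simps)
lemma wedge_zero1 [simp]: "wedge 0 b = 0" and wedge_zero2 [simp]: "wedge a 0 = 0"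
  by (simp_all add: vec_eq_iff wedge_def)
lemma wedge_swap: "wedge a b = - wedge b a"
  by (simp add: vec_eq_iff wedge_def algebra_simps)
lemma wedge_self [simp]: "wedge a a = 0"
  by (simp add: vec_eq_iff wedge_def algebra_simps)

lemmas wedge_lin = wedge_add1 wedge_add2 wedge_diff1 wedge_diff2 wedge_scale1 wedge_scale2 wedge_neg1 wedge_neg2

lemma matrix_add_rdistrib': "((B + C) ** A) = (B ** A) + (C ** A)"
  by (simp add: vec_eq_iff matrix_matrix_mult_def sum.distrib algebra_simps)
lemma lb_add1: "lie_bracket (A + B) C = lie_bracket A C + lie_bracket B C"
  by (simp add: lie_bracket_def matrix_add_ldistrib matrix_add_rdistrib' algebra_simps)
lemma lb_add2: "lie_bracket C (A + B) = lie_bracket C A + lie_bracket C B"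
  by (simp add: lie_bracket_def matrix_add_ldistrib matrix_add_rdistrib' algebra_simps)
lemma lb_scale1: "lie_bracket (r *\<^sub>R A) C = r *\<^sub>R lie_bracket A C"
  by (simp add: lie_bracket_def vec_eq_iff matrix_matrix_mult_def sum_distrib_left algebra_simps)
lemma lb_scale2: "lie_bracket C (r *\<^sub>R A) = r *\<^sub>R lie_bracket C A"
  by (simp add: lie_bracket_def vec_eq_iff matrix_matrix_mult_def sum_distrib_left algebra_simps)
lemma lb_diff1: "lie_bracket (A - B) C = lie_bracket A C - lie_bracket B C"
  using lb_add1[of A "-B" C] lb_scale1[of "-1" B C] by simp
lemma lb_diff2: "lie_bracket C (A - B) = lie_bracket C A - lie_bracket C B"
  using lb_add2[of C A "-B"] lb_scale2[of C "-1" B] by simp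
lemma lb_neg1: "lie_bracket (- A) C = - lie_bracket A C"
  using lb_scale1[of "-1" A C] by simp
lemma lb_neg2: "lie_bracket C (- A) = - lie_bracket C A"
  using lb_scale2[of C "-1" A] by simp
lemma lb_zero1 [simp]: "lie_bracket 0 C = 0" and lb_zero2 [simp]: "lie_bracket C 0 = 0"
  by (simp_all add: lie_bracket_def)
lemmas lb_lin = lb_add1 lb_add2 lb_scale1 lb_scale2 lb_diff1 lb_diff2 lb_neg1 lb_neg2

lemma skew_entry: "skew F \<Longrightarrow> F $ k $ j = - (F $ j $ k)"
proof -
  assume "skew F"
  then have "transpose F $ j $ k = (- F) $ j $ k" by (simp add: skew_def)
  then show ?thesis by (simp add: transpose_def)
qed

lemma skew_inner: assumes "skew F" shows "(F *v x) \<bullet> y = - (x \<bullet> (F *v y))"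
proof -
  have "(F *v x) \<bullet> y = x \<bullet> (transpose F *v y)"
    by (metis dot_lmul_matrix inner_commute transpose_matrix_vector)
  also have "transpose F = - F" using assms skew_def by auto
  finally show ?thesis by (simp add: matrix_vector_mult_def inner_vec_def vec_eq_iff sum_negf)
qed

lemma skew_wedge: "skew (wedge a b)"
  by (simp add: skew_def wedge_def transpose_def vec_eq_iff)


lemma mult_wedge_left: "F ** wedge X Y = (\<chi> i j. (F *v Y) $ i * X $ j - (F *v X) $ i * Y $ j)"
  unfolding wedge_def
  by (simp add: vec_eq_iff matrix_matrix_mult_def matrix_vector_mult_def right_diff_distrib
       sum_subtractf sum_distrib_right mult.assoc mult.left_commute)

lemma mult_wedge_right: "wedge X Y ** F = (\<chi> i j. Y $ i * (X v* F) $ j - X $ i * (Y v* F) $ j)"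
  unfolding wedge_def
  by (simp add: vec_eq_iff matrix_matrix_mult_def vector_matrix_mult_def left_diff_distrib
       sum_subtractf sum_distrib_left mult.assoc mult.left_commute)

lemma skew_vmult: assumes "skew F" shows "X v* F = - (F *v X)"
proof -
  have "X v* F = transpose F *v X" by simp
  also have "transpose F = - F" using assms skew_def by auto
  finally show ?thesis by (simp add: matrix_vector_mult_def vec_eq_iff sum_negf)
qed

lemma bracket_skew_wedge: assumes "skew F"
  shows "lie_bracket F (wedge X Y) = wedge X (F *v Y) + wedge (F *v X) Y"
  unfolding lie_bracket_def mult_wedge_left mult_wedge_right skew_vmult[OF assms]
  by (simp add: vec_eq_iff wedge_def algebra_simps)


lemma bracket_wedge:
  "lie_bracket (wedge a b) (wedge c d) = (a \<bullet> d) *\<^sub>R wedge c b + (a \<bullet> c) *\<^sub>R wedge b d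
     + (b \<bullet> d) *\<^sub>R wedge a c + (b \<bullet> c) *\<^sub>R wedge d a"
proof -
  have "lie_bracket (wedge a b) (wedge c d) = wedge c ((a \<bullet> d) *\<^sub>R b - (b \<bullet> d) *\<^sub>R a)
     + wedge ((a \<bullet> c) *\<^sub>R b - (b \<bullet> c) *\<^sub>R a) d"
    by (simp add: bracket_skew_wedge[OF skew_wedge] wedge_apply)
  also have "\<dots> = (a \<bullet> d) *\<^sub>R wedge c b - (b \<bullet> d) *\<^sub>R wedge c a
     + ((a \<bullet> c) *\<^sub>R wedge b d - (b \<bullet> c) *\<^sub>R wedge a d)"
    by (simp only: wedge_diff1 wedge_diff2 wedge_scale1 wedge_scale2)
  also have "\<dots> = (a \<bullet> d) *\<^sub>R wedge c b + (a \<bullet> c) *\<^sub>R wedge b d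
     + (b \<bullet> d) *\<^sub>R wedge a c + (b \<bullet> c) *\<^sub>R wedge d a"
    using wedge_swap[of c a] wedge_swap[of a d] by (simp add: algebra_simps)
  finally show ?thesis .
qed

lemma lg_subspace: "subspace (lie_generated S)"
  unfolding lie_generated_def by (rule subspace_Inter) auto
lemma lg_closed: "lie_closed (lie_generated S)"
  unfolding lie_generated_def lie_closed_def by blast
lemma lg_sup: "S \<subseteq> lie_generated S"
  unfolding lie_generated_def by blast
lemma lg_least: "subspace L \<Longrightarrow> lie_closed L \<Longrightarrow> S \<subseteq> L \<Longrightarrow> lie_generated S \<subseteq> L"
  unfolding lie_generated_def by blast

lemma lie_closed_span:
  assumes "\<And>a b. a \<in> W \<Longrightarrow> b \<in> W \<Longrightarrow> lie_bracket a b \<in> span W"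
  shows "lie_closed (span W)"
proof -
  have 1: "lie_bracket x b \<in> span W" if "x \<in> span W" "b \<in> W" for x b
  proof -
    have "subspace {x. lie_bracket x b \<in> span W}"
      by (auto simp: subspace_def lb_add1 lb_scale1 span_add span_scale span_zero)
    then show ?thesis using span_induct[OF that(1), of "\<lambda>x. lie_bracket x b \<in> span W"] assms that
      by auto
  qed
  have 2: "lie_bracket x y \<in> span W" if "x \<in> span W" "y \<in> span W" for x y
  proof -
    have "subspace {y. lie_bracket x y \<in> span W}"
      by (auto simp: subspace_def lb_add2 lb_scale2 span_add span_scale span_zero)
    then show ?thesis using span_induct[OF that(2), of "\<lambda>y. lie_bracket x y \<in> span W"] 1 that
      by auto
  qed
  show ?thesis unfolding lie_closed_def using 2 by blast
qed

lemma V1_V2_orth: assumes "X \<in> V1" "Y \<in> V2" shows "X \<bullet> Y = 0"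
  unfolding inner_vec_def
proof (rule sum.neutral, rule ballI)
  fix i :: "'a + 'b"
  have "\<forall>i. X $ Inr i = 0" "\<forall>i. Y $ Inl i = 0" using assms by (auto simp: V1_def V2_def)
  then show "X $ i \<bullet> Y $ i = 0" by (cases i) auto
qed

lemma subspace_V1: "subspace V1"
  by (auto simp: subspace_def V1_def)
lemma subspace_V2: "subspace V2"
  by (auto simp: subspace_def V2_def)

lemma axis_Inl_V1: "axis (Inl a) c \<in> V1"
  by (simp add: V1_def axis_def)
lemma axis_Inr_V2: "axis (Inr a) c \<in> V2"
  by (simp add: V2_def axis_def)




lemma bracket_wedge_orth:
  "a \<bullet> d = 0 \<Longrightarrow> a \<bullet> c = 0 \<Longrightarrow> b \<bullet> d = 0 \<Longrightarrow> b \<bullet> c = 0 \<Longrightarrow> lie_bracket (wedge a b) (wedge c d) = 0"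
  by (simp add: bracket_wedge)

lemma exists_orth2:
  fixes U :: "'a::euclidean_space set"
  assumes U: "subspace U" and a: "a \<in> U" and b: "b \<in> U" and d: "3 \<le> dim U"
  shows "\<exists>w\<in>U. w \<noteq> 0 \<and> w \<bullet> a = 0 \<and> w \<bullet> b = 0"
proof -
  let ?A = "span {a, b}"
  have sA: "subspace ?A" by (rule subspace_span)
  have AU: "?A \<subseteq> U" using span_minimal[of "{a,b}" U] a b U by auto
  have "dim ?A \<le> card {a, b}" using dim_le_card[of "{a,b}" "{a,b}"] by (simp add: span_base subsetI)
  also have "card {a, b} \<le> 2" by (simp add: card_insert_if)
  finally have dA: "dim ?A \<le> 2" .
  have "dim {y \<in> U. \<forall>x \<in> ?A. orthogonal x y} + dim ?A = dim U"
    by (rule dim_subspace_orthogonal_to_vectors[OF sA U AU])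
  then have "dim {y \<in> U. \<forall>x \<in> ?A. orthogonal x y} \<noteq> 0" using dA d by linarith
  then obtain w where w: "w \<in> U" "\<forall>x \<in> ?A. orthogonal x w" "w \<noteq> 0"
    by (auto simp: dim_eq_0)
  have "orthogonal a w" "orthogonal b w" using w(2) by (auto intro: span_base)
  then show ?thesis using w by (auto simp: orthogonal_def inner_commute)
qed

lemma dim_ge2:
  fixes U :: "'a::euclidean_space set"
  assumes U: "subspace U" and "a \<in> U" "b \<in> U" "a \<noteq> 0" "b \<noteq> 0" "a \<bullet> b = 0"
  shows "2 \<le> dim U"
proof -
  have ab: "a \<noteq> b" using assms by auto
  have "pairwise orthogonal {a, b}" using assms
    by (auto simp: pairwise_def orthogonal_def inner_commute)
  then have "independent {a, b}" using assms pairwise_orthogonal_independent by auto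
  then have "card {a, b} \<le> dim U" using independent_card_le_dim[of "{a,b}" U] assms by auto
  then show ?thesis using ab by simp
qed

lemma g_add: "subspace g \<Longrightarrow> a \<in> g \<Longrightarrow> b \<in> g \<Longrightarrow> a + b \<in> g"
  by (simp add: subspace_add)
lemma g_diff: "subspace g \<Longrightarrow> a \<in> g \<Longrightarrow> b \<in> g \<Longrightarrow> a - b \<in> g"
  by (simp add: subspace_diff)
lemma g_scale: "subspace g \<Longrightarrow> a \<in> g \<Longrightarrow> c *\<^sub>R a \<in> g"
  by (simp add: subspace_scale)
lemma g_neg: "subspace g \<Longrightarrow> a \<in> g \<Longrightarrow> - a \<in> g"
  by (simp add: subspace_neg)
lemma g_scale_iff: "subspace g \<Longrightarrow> c \<noteq> 0 \<Longrightarrow> c *\<^sub>R a \<in> g \<Longrightarrow> a \<in> g"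
  using g_scale[of g "c *\<^sub>R a" "inverse c"] by simp
lemma g_br: "lie_closed g \<Longrightarrow> a \<in> g \<Longrightarrow> b \<in> g \<Longrightarrow> lie_bracket a b \<in> g"
  by (simp add: lie_closed_def)




lemma core:
  fixes F :: "real^'k^'k" and U1 U2 :: "(real^'k) set" and g :: "(real^'k^'k) set"
  assumes sU1: "subspace U1" and sU2: "subspace U2"
   and orth: "\<And>x y. x \<in> U1 \<Longrightarrow> y \<in> U2 \<Longrightarrow> x \<bullet> y = 0"
   and sk: "skew F"
   and FU1: "\<And>x. x \<in> U1 \<Longrightarrow> F *v x \<in> U2" and FU2: "\<And>y. y \<in> U2 \<Longrightarrow> F *v y \<in> U1"
   and sg: "subspace g" and cg: "lie_closed g"
   and gen: "\<And>X Y. X \<in> U1 \<Longrightarrow> Y \<in> U2 \<Longrightarrow> wedge X (F *v Y) + wedge (F *v X) Y \<in> g"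
   and X0: "X0 \<in> U1" "X0 \<bullet> X0 = 1" and mu: "\<mu> > 0" and eig: "F *v (F *v X0) = - \<mu> *\<^sub>R X0"
   and X1: "X1 \<in> U1" "X1 \<bullet> X0 = 0" "F *v X1 \<noteq> 0"
   and d3: "3 \<le> dim U1"
   and X: "X \<in> U1" "X \<bullet> X0 = 0"
  shows "wedge X X0 \<in> g"
proof -
  define Y0 where "Y0 = F *v X0"
  have Y0U: "Y0 \<in> U2" using FU1 X0 Y0_def by auto
  have FY0: "F *v Y0 = - \<mu> *\<^sub>R X0" using eig Y0_def by simp
  have Y0Y0: "Y0 \<bullet> Y0 = \<mu>"
    using skew_inner[OF sk, of X0 Y0] FY0 X0 by (simp add: Y0_def)
  have in1: "(F *v X) \<bullet> Y0 = 0" if "X \<in> U1" "X \<bullet> X0 = 0" for X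
    using skew_inner[OF sk, of X Y0] FY0 that by (simp add: inner_commute)
  have in2: "(F *v Y) \<bullet> X0 = 0" if "Y \<in> U2" "Y \<bullet> Y0 = 0" for Y
    using skew_inner[OF sk, of Y X0] that by (simp add: Y0_def)
  have pure: "wedge X (F *v Y) \<in> g" "wedge (F *v X) Y \<in> g"
    if XU: "X \<in> U1" "X \<bullet> X0 = 0" and YU: "Y \<in> U2" "Y \<bullet> Y0 = 0" for X Y
  proof -
    have FX: "F *v X \<in> U2" using FU1 XU by auto
    have FY: "F *v Y \<in> U1" using FU2 YU by auto
    have o: "X \<bullet> Y0 = 0" "X \<bullet> Y = 0" "X \<bullet> (F *v X) = 0"
      "X0 \<bullet> Y0 = 0" "X0 \<bullet> Y = 0" "X0 \<bullet> (F *v X) = 0"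
      "(F *v Y) \<bullet> Y0 = 0" "(F *v Y) \<bullet> Y = 0" "(F *v Y) \<bullet> (F *v X) = 0"
      using orth XU YU FX FY X0 Y0U by auto
    have o': "Y0 \<bullet> X = 0" "Y \<bullet> X = 0" "(F *v X) \<bullet> X = 0"
      "Y0 \<bullet> X0 = 0" "Y \<bullet> X0 = 0" "(F *v X) \<bullet> X0 = 0"
      "Y0 \<bullet> (F *v Y) = 0" "Y \<bullet> (F *v Y) = 0" "(F *v X) \<bullet> (F *v Y) = 0"
      using o by (simp_all add: inner_commute)
    have i: "X \<bullet> X0 = 0" "X0 \<bullet> X = 0" "X0 \<bullet> (F *v Y) = 0" "(F *v Y) \<bullet> X0 = 0"
      "(F *v X) \<bullet> Y0 = 0" "Y0 \<bullet> (F *v X) = 0" "Y0 \<bullet> Y = 0" "Y \<bullet> Y0 = 0"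
      using XU YU in1[OF XU] in2[OF YU] by (simp_all add: inner_commute)
    have GX: "wedge X (F *v Y0) + wedge (F *v X) Y0 \<in> g" using gen XU Y0U by auto
    have GY: "wedge X0 (F *v Y) + wedge Y0 Y \<in> g" using gen X0 YU Y0_def by auto
    have GXY: "wedge X (F *v Y) + wedge (F *v X) Y \<in> g" using gen XU YU by auto
    have R: "lie_bracket (wedge X (F *v Y0) + wedge (F *v X) Y0) (wedge X0 (F *v Y) + wedge Y0 Y)
       = lie_bracket (- \<mu> *\<^sub>R wedge X X0 + wedge (F *v X) Y0) (wedge X0 (F *v Y) + wedge Y0 Y)"
      by (simp only: FY0 wedge_scale2)
    also have "\<dots> = - \<mu> *\<^sub>R lie_bracket (wedge X X0) (wedge X0 (F *v Y))
        - \<mu> *\<^sub>R lie_bracket (wedge X X0) (wedge Y0 Y)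
        + lie_bracket (wedge (F *v X) Y0) (wedge X0 (F *v Y))
        + lie_bracket (wedge (F *v X) Y0) (wedge Y0 Y)"
      by (simp add: lb_lin)
    also have "\<dots> = - \<mu> *\<^sub>R wedge (F *v Y) X + \<mu> *\<^sub>R wedge Y (F *v X)"
      by (simp add: bracket_wedge o o' i X0 Y0Y0)
    also have "\<dots> = \<mu> *\<^sub>R wedge X (F *v Y) - \<mu> *\<^sub>R wedge (F *v X) Y"
      using wedge_swap[of "F *v Y" X] wedge_swap[of Y "F *v X"] by simp
    finally have R': "\<dots> \<in> g" using g_br[OF cg GX GY] by simp
    have "\<mu> *\<^sub>R (wedge X (F *v Y) + wedge (F *v X) Y) + (\<mu> *\<^sub>R wedge X (F *v Y) - \<mu> *\<^sub>R wedge (F *v X) Y) \<in> g"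
      by (rule g_add[OF sg g_scale[OF sg GXY] R'])
    moreover have "\<mu> *\<^sub>R (wedge X (F *v Y) + wedge (F *v X) Y) + (\<mu> *\<^sub>R wedge X (F *v Y) - \<mu> *\<^sub>R wedge (F *v X) Y) = (2 * \<mu>) *\<^sub>R wedge X (F *v Y)"
      by (simp add: vec_eq_iff algebra_simps)
    ultimately have "(2 * \<mu>) *\<^sub>R wedge X (F *v Y) \<in> g" by simp
    then show "wedge X (F *v Y) \<in> g" by (rule g_scale_iff[OF sg, rotated]) (use mu in simp)
    have "\<mu> *\<^sub>R (wedge X (F *v Y) + wedge (F *v X) Y) - (\<mu> *\<^sub>R wedge X (F *v Y) - \<mu> *\<^sub>R wedge (F *v X) Y) \<in> g"
      by (rule g_diff[OF sg g_scale[OF sg GXY] R'])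
    moreover have "\<mu> *\<^sub>R (wedge X (F *v Y) + wedge (F *v X) Y) - (\<mu> *\<^sub>R wedge X (F *v Y) - \<mu> *\<^sub>R wedge (F *v X) Y) = (2 * \<mu>) *\<^sub>R wedge (F *v X) Y"
      by (simp add: vec_eq_iff algebra_simps)
    ultimately have "(2 * \<mu>) *\<^sub>R wedge (F *v X) Y \<in> g" by simp
    then show "wedge (F *v X) Y \<in> g" by (rule g_scale_iff[OF sg, rotated]) (use mu in simp)
  qed
  define v where "v = F *v X1"
  define u where "u = F *v v"
  have vU: "v \<in> U2" "v \<bullet> Y0 = 0" using FU1 X1 in1 v_def by auto
  have uU: "u \<in> U1" "u \<bullet> X0 = 0" using FU2 vU in2 u_def by auto
  have "u \<bullet> X1 = - (v \<bullet> v)" using skew_inner[OF sk, of v X1] by (simp add: u_def v_def)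
  then have "u \<noteq> 0" using X1(3) v_def by auto
  then have uu: "u \<bullet> u \<noteq> 0" by simp
  have wu: "wedge Z u \<in> g" if "Z \<in> U1" "Z \<bullet> X0 = 0" for Z
    using pure(1)[OF that vU] u_def by simp
  have G2: "wedge Z Z' \<in> g" if Z: "Z \<in> U1" "Z \<bullet> X0 = 0" and Z': "Z' \<in> U1" "Z' \<bullet> X0 = 0" for Z Z'
  proof -
    have "lie_bracket (wedge Z u) (wedge Z' u) = (Z \<bullet> u) *\<^sub>R wedge Z' u + (u \<bullet> u) *\<^sub>R wedge Z Z'
       - (u \<bullet> Z') *\<^sub>R wedge Z u"
      using wedge_swap[of u Z] by (simp add: bracket_wedge)
    then have "(u \<bullet> u) *\<^sub>R wedge Z Z' = lie_bracket (wedge Z u) (wedge Z' u)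
        - (Z \<bullet> u) *\<^sub>R wedge Z' u + (u \<bullet> Z') *\<^sub>R wedge Z u" by (simp add: algebra_simps)
    also have "\<dots> \<in> g"
      using wu[OF Z] wu[OF Z'] g_br[OF cg] g_add[OF sg] g_diff[OF sg] g_scale[OF sg] by metis
    finally show ?thesis by (rule g_scale_iff[OF sg uu])
  qed
  obtain W where W: "W \<in> U1" "W \<noteq> 0" "W \<bullet> X0 = 0" "W \<bullet> X = 0"
    using exists_orth2[OF sU1 X0(1) X(1) d3] by blast
  have FW: "F *v W \<in> U2" using FU1 W by auto
  have GW: "wedge W (F *v Y0) + wedge (F *v W) Y0 \<in> g" using gen W(1) Y0U by auto
  have "lie_bracket (wedge X W) (wedge W (F *v Y0) + wedge (F *v W) Y0)
        = - \<mu> *\<^sub>R lie_bracket (wedge X W) (wedge W X0) + lie_bracket (wedge X W) (wedge (F *v W) Y0)"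
    by (simp add: FY0 wedge_lin lb_lin)
  also have "lie_bracket (wedge X W) (wedge (F *v W) Y0) = 0"
    by (rule bracket_wedge_orth) (use orth X W FW Y0U in auto)
  also have "lie_bracket (wedge X W) (wedge W X0) = (W \<bullet> W) *\<^sub>R wedge X0 X"
    using X W by (simp add: bracket_wedge inner_commute)
  finally have "lie_bracket (wedge X W) (wedge W (F *v Y0) + wedge (F *v W) Y0)
     = (\<mu> * (W \<bullet> W)) *\<^sub>R wedge X X0"
    using wedge_swap[of X0 X] by simp
  moreover have "lie_bracket (wedge X W) (wedge W (F *v Y0) + wedge (F *v W) Y0) \<in> g"
    using g_br[OF cg G2[OF X W(1) W(3)] GW] .
  ultimately have "(\<mu> * (W \<bullet> W)) *\<^sub>R wedge X X0 \<in> g" by simp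
  then show ?thesis by (rule g_scale_iff[OF sg, rotated]) (use mu W(2) in simp)
qed




lemma quad_zero:
  fixes c d :: real
  assumes h: "\<And>t. 2 * t * c + t^2 * d \<le> 0"
  shows "c = 0"
proof (rule ccontr)
  assume c: "c \<noteq> 0"
  define t where "t = c / (1 + \<bar>d\<bar>)"
  have pos: "1 + \<bar>d\<bar> > 0" by simp
  have "t^2 * d \<ge> - (t^2 * \<bar>d\<bar>)"
    by (metis abs_ge_minus_self abs_mult abs_of_nonneg minus_le_iff mult_left_mono zero_le_power2 mult_minus_right)
  moreover have "2 * t * c - t^2 * \<bar>d\<bar> > 0"
  proof -
    have tc: "c = t * (1 + \<bar>d\<bar>)" using pos by (simp add: t_def)
    have eq: "(2 * t * c - t^2 * \<bar>d\<bar>) * (1 + \<bar>d\<bar>)^2 = c^2 * (2 + \<bar>d\<bar>)"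
      unfolding tc by (simp add: power2_eq_square algebra_simps)
    have "c^2 * (2 + \<bar>d\<bar>) > 0" using c by simp
    then have "(2 * t * c - t^2 * \<bar>d\<bar>) * (1 + \<bar>d\<bar>)^2 > 0" using eq by simp
    then show ?thesis using pos by (simp add: zero_less_mult_iff)
  qed
  ultimately have "2 * t * c + t^2 * d > 0" by linarith
  then show False using h[of t] by linarith
qed

lemma eigen:
  fixes F :: "real^'k^'k" and U :: "(real^'k) set"
  assumes U: "subspace U" and sk: "skew F" and FU: "\<And>x. x \<in> U \<Longrightarrow> F *v (F *v x) \<in> U"
    and nz: "x1 \<in> U" "F *v x1 \<noteq> 0"
  shows "\<exists>X0 \<mu>. X0 \<in> U \<and> X0 \<bullet> X0 = 1 \<and> \<mu> > 0 \<and> F *v (F *v X0) = - \<mu> *\<^sub>R X0"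
proof -
  define f where "f x = (F *v x) \<bullet> (F *v x)" for x
  let ?S = "U \<inter> sphere 0 1"
  have cS: "compact ?S" using closed_subspace[OF U] compact_sphere by (rule closed_Int_compact)
  have x1: "x1 \<noteq> 0" using nz by auto
  have "x1 /\<^sub>R norm x1 \<in> ?S" using x1 nz(1) U by (simp add: subspace_scale)
  then have neS: "?S \<noteq> {}" by blast
  have cont: "continuous_on ?S f" unfolding f_def
    by (intro continuous_intros linear_continuous_on matrix_vector_mul_linear)
  obtain X0 where X0: "X0 \<in> ?S" and mx: "\<And>y. y \<in> ?S \<Longrightarrow> f y \<le> f X0"
    using continuous_attains_sup[OF cS neS cont] by blast
  define \<mu> where "\<mu> = f X0"
  have X0U: "X0 \<in> U" and X0n: "X0 \<bullet> X0 = 1" using X0 by (auto simp: dot_square_norm)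
  have bound: "f x \<le> \<mu> * (x \<bullet> x)" if "x \<in> U" for x
  proof (cases "x = 0")
    case True then show ?thesis by (simp add: f_def)
  next
    case False
    have "x /\<^sub>R norm x \<in> ?S" using False that U by (simp add: subspace_scale)
    then have "f (x /\<^sub>R norm x) \<le> \<mu>" using mx \<mu>_def by blast
    moreover have "f (x /\<^sub>R norm x) = f x / (norm x)^2"
      by (simp add: f_def matrix_vector_mult_scaleR power2_eq_square divide_inverse)
    ultimately have "f x / (norm x)^2 \<le> \<mu>" by simp
    then have "f x \<le> \<mu> * (norm x)^2" using False by (simp add: divide_le_eq)
    then show ?thesis by (simp add: power2_norm_eq_inner)
  qed
  have "f x1 > 0" using nz(2) by (simp add: f_def)
  moreover have "f x1 \<le> \<mu> * (x1 \<bullet> x1)" using bound nz(1) .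
  moreover have "x1 \<bullet> x1 > 0" using x1 by simp
  ultimately have mu: "\<mu> > 0" by (smt (verit) mult_nonpos_nonneg)
  have var: "(F *v X0) \<bullet> (F *v v) - \<mu> * (X0 \<bullet> v) = 0" if v: "v \<in> U" for v
  proof (rule quad_zero)
    fix t :: real
    have "X0 + t *\<^sub>R v \<in> U" using X0U v U by (simp add: subspace_add subspace_scale)
    then have "f (X0 + t *\<^sub>R v) \<le> \<mu> * ((X0 + t *\<^sub>R v) \<bullet> (X0 + t *\<^sub>R v))" by (rule bound)
    moreover have "f (X0 + t *\<^sub>R v) = \<mu> + 2 * t * ((F *v X0) \<bullet> (F *v v)) + t^2 * f v"
      by (simp add: f_def \<mu>_def matrix_vector_right_distrib matrix_vector_mult_scaleR
          inner_add_left inner_add_right inner_commute power2_eq_square algebra_simps)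
    moreover have "(X0 + t *\<^sub>R v) \<bullet> (X0 + t *\<^sub>R v) = 1 + 2 * t * (X0 \<bullet> v) + t^2 * (v \<bullet> v)"
      using X0n by (simp add: inner_add_left inner_add_right inner_commute power2_eq_square algebra_simps)
    ultimately have H: "\<mu> + 2 * t * ((F *v X0) \<bullet> (F *v v)) + t^2 * f v
        \<le> \<mu> * (1 + 2 * t * (X0 \<bullet> v) + t^2 * (v \<bullet> v))" by metis
    have "2 * t * ((F *v X0) \<bullet> (F *v v) - \<mu> * (X0 \<bullet> v)) + t^2 * (f v - \<mu> * (v \<bullet> v))
      = (\<mu> + 2 * t * ((F *v X0) \<bullet> (F *v v)) + t^2 * f v)
        - \<mu> * (1 + 2 * t * (X0 \<bullet> v) + t^2 * (v \<bullet> v))" by (simp add: algebra_simps)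
    then show "2 * t * ((F *v X0) \<bullet> (F *v v) - \<mu> * (X0 \<bullet> v)) + t^2 * (f v - \<mu> * (v \<bullet> v)) \<le> 0"
      using H by linarith
  qed
  define z where "z = F *v (F *v X0) + \<mu> *\<^sub>R X0"
  have zU: "z \<in> U" using FU[OF X0U] X0U U by (simp add: z_def subspace_add subspace_scale)
  have "z \<bullet> z = 0"
  proof -
    have "(F *v (F *v X0)) \<bullet> z = - ((F *v X0) \<bullet> (F *v z))" by (rule skew_inner[OF sk])
    then have "z \<bullet> z = - ((F *v X0) \<bullet> (F *v z)) + \<mu> * (X0 \<bullet> z)"
      by (simp add: z_def inner_add_left)
    then show ?thesis using var[OF zU] by simp
  qed
  then have "z = 0" by simp
  then have "F *v (F *v X0) = - \<mu> *\<^sub>R X0" by (simp add: z_def eq_neg_iff_add_eq_0)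
  then show ?thesis using X0U X0n mu by blast
qed

lemma decomp:
  fixes U :: "(real^'k) set" and g :: "(real^'k^'k) set"
  assumes U: "subspace U" and sg: "subspace g" and e: "e \<in> U" "e \<bullet> e = c" "c > 0"
    and h1: "\<And>x. x \<in> U \<Longrightarrow> x \<bullet> e = 0 \<Longrightarrow> wedge x e \<in> g"
    and h2: "\<And>x y. x \<in> U \<Longrightarrow> y \<in> U \<Longrightarrow> x \<bullet> e = 0 \<Longrightarrow> y \<bullet> e = 0 \<Longrightarrow> wedge x y \<in> g"
    and ab: "a \<in> U" "b \<in> U"
  shows "wedge a b \<in> g"
proof -
  define \<alpha> where "\<alpha> = (a \<bullet> e) / c"
  define \<beta> where "\<beta> = (b \<bullet> e) / c"
  define a' where "a' = a - \<alpha> *\<^sub>R e"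
  define b' where "b' = b - \<beta> *\<^sub>R e"
  have a'U: "a' \<in> U" "a' \<bullet> e = 0" using ab e U
    by (auto simp: a'_def \<alpha>_def subspace_diff subspace_scale inner_diff_left)
  have b'U: "b' \<in> U" "b' \<bullet> e = 0" using ab e U
    by (auto simp: b'_def \<beta>_def subspace_diff subspace_scale inner_diff_left)
  have "wedge a b = wedge (a' + \<alpha> *\<^sub>R e) (b' + \<beta> *\<^sub>R e)" by (simp add: a'_def b'_def)
  also have "\<dots> = wedge a' b' + \<beta> *\<^sub>R wedge a' e - \<alpha> *\<^sub>R wedge b' e"
    using wedge_swap[of e b'] by (simp add: wedge_lin)
  also have "\<dots> \<in> g"
    using h1[OF a'U] h1[OF b'U] h2[OF a'U(1) b'U(1) a'U(2) b'U(2)] g_add[OF sg] g_diff[OF sg] g_scale[OF sg]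
    by metis
  finally show ?thesis .
qed




lemma mat_col: "(M :: real^'k^'k) $ i $ j = (M *v axis j 1) $ i"
  by (simp add: matrix_vector_mult_def axis_def if_distrib cong: if_cong)

theorem mainTheorem3:
  fixes F :: "real ^ ('n::finite + 'm::finite) ^ ('n + 'm)"
  assumes "skew F"
    and "F \<noteq> 0"
    and "\<forall>X Y. X \<in> (V1 :: (real ^ ('n + 'm)) set) \<longrightarrow> Y \<in> V1 \<longrightarrow> (F *v X) \<bullet> Y = 0"
    and "\<forall>X Y. X \<in> (V2 :: (real ^ ('n + 'm)) set) \<longrightarrow> Y \<in> V2 \<longrightarrow> (F *v X) \<bullet> Y = 0"
    and "\<not> (dim (V1 :: (real ^ ('n + 'm)) set) = 2 \<and> dim (V2 :: (real ^ ('n + 'm)) set) = 2)"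
  shows "lie_generated {lie_bracket F (wedge X Y) | X Y. X \<in> V1 \<and> Y \<in> V2}
           = (so_sum :: (real ^ ('n + 'm) ^ ('n + 'm)) set)"
proof -
  note sk = assms(1)
  define g where "g = lie_generated {lie_bracket F (wedge X Y) | X Y. X \<in> (V1 :: (real ^ ('n + 'm)) set) \<and> Y \<in> V2}"
  have sg: "subspace g" unfolding g_def by (rule lg_subspace)
  have cg: "lie_closed g" unfolding g_def by (rule lg_closed)
  have FV1: "F *v X \<in> V2" if "X \<in> V1" for X
  proof -
    have "(F *v X) $ Inl i = 0" for i
    proof -
      have "(F *v X) \<bullet> axis (Inl i) 1 = 0" using assms(3) that axis_Inl_V1[of i 1] by blast
      then show ?thesis by (simp add: cart_eq_inner_axis)
    qed
    then show ?thesis by (simp add: V2_def)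
  qed
  have FV2: "F *v Y \<in> V1" if "Y \<in> V2" for Y
  proof -
    have "(F *v Y) $ Inr i = 0" for i
    proof -
      have "(F *v Y) \<bullet> axis (Inr i) 1 = 0" using assms(4) that axis_Inr_V2[of i 1] by blast
      then show ?thesis by (simp add: cart_eq_inner_axis)
    qed
    then show ?thesis by (simp add: V1_def)
  qed
  have gen: "wedge X (F *v Y) + wedge (F *v X) Y \<in> g" if "X \<in> V1" "Y \<in> V2" for X Y
  proof -
    have "lie_bracket F (wedge X Y) \<in> g" unfolding g_def using that
      by (intro subsetD[OF lg_sup]) blast
    then show ?thesis using bracket_skew_wedge[OF sk] by simp
  qed
  have orth: "\<And>x y. x \<in> V1 \<Longrightarrow> y \<in> V2 \<Longrightarrow> x \<bullet> y = 0" by (rule V1_V2_orth)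
  have orth': "\<And>x y. x \<in> V1 \<Longrightarrow> y \<in> V2 \<Longrightarrow> y \<bullet> x = 0" using orth by (simp add: inner_commute)
  have sub1: "g \<subseteq> so_sum"
    unfolding g_def so_sum_def
  proof (rule lg_least)
    show "subspace (span ({wedge X Y |X Y. X \<in> (V1 :: (real ^ ('n + 'm)) set) \<and> Y \<in> V1} \<union> {wedge X Y |X Y. X \<in> (V2 :: (real ^ ('n + 'm)) set) \<and> Y \<in> V2}))"
      by (rule subspace_span)
    show "lie_closed (span ({wedge X Y |X Y. X \<in> (V1 :: (real ^ ('n + 'm)) set) \<and> Y \<in> V1} \<union> {wedge X Y |X Y. X \<in> (V2 :: (real ^ ('n + 'm)) set) \<and> Y \<in> V2}))"
    proof (rule lie_closed_span)
      fix a b :: "real ^ ('n + 'm) ^ ('n + 'm)"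
      assume a: "a \<in> {wedge X Y |X Y. X \<in> (V1 :: (real ^ ('n + 'm)) set) \<and> Y \<in> V1} \<union> {wedge X Y |X Y. X \<in> (V2 :: (real ^ ('n + 'm)) set) \<and> Y \<in> V2}"
        and b: "b \<in> {wedge X Y |X Y. X \<in> (V1 :: (real ^ ('n + 'm)) set) \<and> Y \<in> V1} \<union> {wedge X Y |X Y. X \<in> (V2 :: (real ^ ('n + 'm)) set) \<and> Y \<in> V2}"
      let ?W = "{wedge X Y |X Y. X \<in> (V1 :: (real ^ ('n + 'm)) set) \<and> Y \<in> V1} \<union> {wedge X Y |X Y. X \<in> V2 \<and> Y \<in> V2}"
      have inW1: "wedge x y \<in> span ?W" if "x \<in> V1" "y \<in> V1" for x y
        using that by (intro span_base) blast
      have inW2: "wedge x y \<in> span ?W" if "x \<in> V2" "y \<in> V2" for x y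
        using that by (intro span_base) blast
      have comb: "p *\<^sub>R w1 + q *\<^sub>R w2 + r *\<^sub>R w3 + s *\<^sub>R w4 \<in> span ?W"
        if "w1 \<in> span ?W" "w2 \<in> span ?W" "w3 \<in> span ?W" "w4 \<in> span ?W" for p q r s w1 w2 w3 w4
        using that by (intro span_add span_scale)
      obtain x y where axy: "a = wedge x y" "(x \<in> V1 \<and> y \<in> V1) \<or> (x \<in> V2 \<and> y \<in> V2)"
        using a by blast
      obtain z w where bzw: "b = wedge z w" "(z \<in> V1 \<and> w \<in> V1) \<or> (z \<in> V2 \<and> w \<in> V2)"
        using b by blast
      let ?R = "(x \<bullet> w) *\<^sub>R wedge z y + (x \<bullet> z) *\<^sub>R wedge y w + (y \<bullet> w) *\<^sub>R wedge x z + (y \<bullet> z) *\<^sub>R wedge w x"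
      have eq: "lie_bracket a b = ?R" unfolding axy(1) bzw(1) by (rule bracket_wedge)
      have "?R \<in> span ?W"
      proof (cases "x \<in> V1 \<and> y \<in> V1")
        case T1: True
        show ?thesis
        proof (cases "z \<in> V1 \<and> w \<in> V1")
          case True then show ?thesis using T1 by (intro comb inW1) auto
        next
          case False
          then have h: "z \<in> V2" "w \<in> V2" using bzw(2) by auto
          have "x \<bullet> w = 0" "x \<bullet> z = 0" "y \<bullet> w = 0" "y \<bullet> z = 0" using orth h T1 by auto
          then show ?thesis by (simp add: span_zero)
        qed
      next
        case F1: False
        then have h1: "x \<in> V2" "y \<in> V2" using axy(2) by auto
        show ?thesis
        proof (cases "z \<in> V2 \<and> w \<in> V2")
          case True then show ?thesis using h1 by (intro comb inW2) auto
        next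
          case False
          then have h: "z \<in> V1" "w \<in> V1" using bzw(2) by auto
          have "x \<bullet> w = 0" "x \<bullet> z = 0" "y \<bullet> w = 0" "y \<bullet> z = 0" using orth' h h1 by auto
          then show ?thesis by (simp add: span_zero)
        qed
      qed
      then show "lie_bracket a b \<in> span ?W" using eq by simp
    qed
    show "{lie_bracket F (wedge X Y) |X Y. X \<in> (V1 :: (real ^ ('n + 'm)) set) \<and> Y \<in> (V2 :: (real ^ ('n + 'm)) set)}
       \<subseteq> span ({wedge X Y |X Y. X \<in> (V1 :: (real ^ ('n + 'm)) set) \<and> Y \<in> V1} \<union> {wedge X Y |X Y. X \<in> (V2 :: (real ^ ('n + 'm)) set) \<and> Y \<in> V2})"
    proof safe
      fix X Y :: "real ^ ('n + 'm)" assume XY: "X \<in> V1" "Y \<in> V2"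
      show "lie_bracket F (wedge X Y) \<in> span ({wedge X Y |X Y. X \<in> (V1 :: (real ^ ('n + 'm)) set) \<and> Y \<in> V1} \<union> {wedge X Y |X Y. X \<in> (V2 :: (real ^ ('n + 'm)) set) \<and> Y \<in> V2})"
        unfolding bracket_skew_wedge[OF sk]
        by (intro span_add span_base) (use XY FV1 FV2 in blast)+
    qed
  qed
  have nzF: "\<exists>x1\<in>V1. F *v x1 \<noteq> 0"
  proof (rule ccontr)
    assume "\<not> ?thesis"
    then have z1: "\<forall>x\<in>V1. F *v x = 0" by blast
    have z2: "F *v y = 0" if "y \<in> V2" for y
    proof -
      have "F *v y \<in> V1" using FV2 that .
      then have "F *v (F *v y) = 0" using z1 by blast
      moreover have "(F *v y) \<bullet> (F *v y) = - (y \<bullet> (F *v (F *v y)))" by (rule skew_inner[OF sk])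
      ultimately show ?thesis by simp
    qed
    have "F = 0"
    proof -
      have "F *v axis j 1 = 0" for j
      proof (cases j)
        case (Inl a) then show ?thesis using z1 axis_Inl_V1[of a 1] by blast
      next
        case (Inr b) then show ?thesis using z2[OF axis_Inr_V2[of b 1]] by simp
      qed
      then show ?thesis by (simp add: vec_eq_iff mat_col[of F])
    qed
    then show False using assms(2) by simp
  qed
  then obtain x1 where x1: "x1 \<in> V1" "F *v x1 \<noteq> 0" by blast
  have FFV1: "\<And>x. x \<in> V1 \<Longrightarrow> F *v (F *v x) \<in> V1" using FV1 FV2 by blast
  obtain X0 \<mu> where X0: "X0 \<in> V1" "X0 \<bullet> X0 = 1" and mu: "\<mu> > 0" and eig: "F *v (F *v X0) = - \<mu> *\<^sub>R X0"
    using eigen[OF subspace_V1 sk FFV1 x1] by blast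
  define Y0 where "Y0 = F *v X0"
  have Y0U: "Y0 \<in> V2" using FV1 X0 Y0_def by auto
  have FY0: "F *v Y0 = - \<mu> *\<^sub>R X0" using eig Y0_def by simp
  have Y0Y0: "Y0 \<bullet> Y0 = \<mu>"
    using skew_inner[OF sk, of X0 Y0] FY0 X0 by (simp add: Y0_def)
  have in1: "(F *v X) \<bullet> Y0 = 0" if "X \<in> V1" "X \<bullet> X0 = 0" for X
    using skew_inner[OF sk, of X Y0] FY0 that by (simp add: inner_commute)
  have in2: "(F *v Y) \<bullet> X0 = 0" if "Y \<in> V2" "Y \<bullet> Y0 = 0" for Y
    using skew_inner[OF sk, of Y X0] that by (simp add: Y0_def)
  have GX: "(- \<mu>) *\<^sub>R wedge X X0 + wedge (F *v X) Y0 \<in> g" if "X \<in> V1" for X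
    using gen[OF that Y0U] FY0 by (simp add: wedge_scale2 wedge_neg2 algebra_simps)
  have GY: "wedge X0 (F *v Y) + wedge Y0 Y \<in> g" if "Y \<in> V2" for Y
    using gen[OF X0(1) that] Y0_def by simp
  have H1_G1: "wedge X X0 \<in> g"
    if H1: "\<And>Y. Y \<in> V2 \<Longrightarrow> Y \<bullet> Y0 = 0 \<Longrightarrow> wedge Y Y0 \<in> g" and X: "X \<in> V1" "X \<bullet> X0 = 0" for X
  proof -
    have "wedge (F *v X) Y0 \<in> g" using H1 FV1 X in1 by blast
    then have "((- \<mu>) *\<^sub>R wedge X X0 + wedge (F *v X) Y0) - wedge (F *v X) Y0 \<in> g"
      using GX[OF X(1)] g_diff[OF sg] by blast
    then have "(- \<mu>) *\<^sub>R wedge X X0 \<in> g" by simp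
    then show ?thesis by (rule g_scale_iff[OF sg, rotated]) (use mu in simp)
  qed
  have G1: "wedge X X0 \<in> g" if X: "X \<in> V1" "X \<bullet> X0 = 0" for X
  proof (cases "\<exists>X1\<in>V1. X1 \<bullet> X0 = 0 \<and> F *v X1 \<noteq> 0")
    case False
    then have "F *v X = 0" using X by blast
    then have "(- \<mu>) *\<^sub>R wedge X X0 \<in> g" using GX[OF X(1)] by simp
    then show ?thesis by (rule g_scale_iff[OF sg, rotated]) (use mu in simp)
  next
    case True
    then obtain X1 where X1: "X1 \<in> V1" "X1 \<bullet> X0 = 0" "F *v X1 \<noteq> 0" by blast
    show ?thesis
    proof (cases "3 \<le> dim (V1 :: (real ^ ('n + 'm)) set)")
      case True
      show ?thesis
        by (rule core[OF subspace_V1 subspace_V2 orth sk FV1 FV2 sg cg gen X0 mu eig X1 True X])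
    next
      case d1: False
      show ?thesis
      proof (cases "3 \<le> dim (V2 :: (real ^ ('n + 'm)) set)")
        case True
        define s where "s = sqrt \<mu>"
        have s: "s > 0" "s * s = \<mu>" using mu by (auto simp: s_def)
        define Z0 where "Z0 = (1/s) *\<^sub>R Y0"
        have Z0a: "Z0 \<in> V2" unfolding Z0_def by (rule subspace_scale[OF subspace_V2 Y0U])
        have "Z0 \<bullet> Z0 = (1/s) * (1/s) * (Y0 \<bullet> Y0)" by (simp add: Z0_def)
        also have "\<dots> = 1" using s Y0Y0 mu by simp
        finally have Z0: "Z0 \<in> V2" "Z0 \<bullet> Z0 = 1" using Z0a by auto
        have eigZ: "F *v (F *v Z0) = - \<mu> *\<^sub>R Z0"
        proof -
          have mneg: "\<And>x. F *v (- x) = - (F *v x)"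
            by (simp add: matrix_vector_mult_def vec_eq_iff sum_negf)
          show ?thesis by (simp add: Z0_def matrix_vector_mult_scaleR FY0 mneg Y0_def[symmetric])
        qed
        have gen': "wedge X (F *v Y) + wedge (F *v X) Y \<in> g" if "X \<in> V2" "Y \<in> V1" for X Y
        proof -
          have "wedge Y (F *v X) + wedge (F *v Y) X \<in> g" using gen that by blast
          then have "- (wedge Y (F *v X) + wedge (F *v Y) X) \<in> g" by (rule g_neg[OF sg])
          moreover have "- (wedge Y (F *v X) + wedge (F *v Y) X) = wedge X (F *v Y) + wedge (F *v X) Y"
            using wedge_swap[of Y "F *v X"] wedge_swap[of "F *v Y" X] by simp
          ultimately show ?thesis by simp
        qed
        define v where "v = F *v X1"
        have vU: "v \<in> V2" "v \<bullet> Z0 = 0" using FV1 X1 in1 by (auto simp: v_def Z0_def)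
        have Fv: "F *v v \<noteq> 0"
        proof
          assume "F *v v = 0"
          then have "(F *v v) \<bullet> X1 = 0" by simp
          moreover have "(F *v v) \<bullet> X1 = - (v \<bullet> (F *v X1))" by (rule skew_inner[OF sk])
          ultimately show False using X1(3) by (simp add: v_def)
        qed
        have H1: "wedge Y Y0 \<in> g" if Y: "Y \<in> V2" "Y \<bullet> Y0 = 0" for Y
        proof -
          have YZ: "Y \<bullet> Z0 = 0" using Y by (simp add: Z0_def)
          have "wedge Y Z0 \<in> g"
            by (rule core[OF subspace_V2 subspace_V1 orth' sk FV2 FV1 sg cg gen' Z0 mu eigZ vU Fv True Y(1) YZ])
          then have "s *\<^sub>R wedge Y Z0 \<in> g" by (rule g_scale[OF sg])
          moreover have "s *\<^sub>R wedge Y Z0 = wedge Y Y0" using s by (simp add: Z0_def wedge_scale2)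
          ultimately show ?thesis by simp
        qed
        show ?thesis by (rule H1_G1[OF H1 X])
      next
        case d2: False
        have X1nz: "X1 \<noteq> 0" using X1(3) by auto
        have X0nz: "X0 \<noteq> 0" using X0 by auto
        have "2 \<le> dim (V1 :: (real ^ ('n + 'm)) set)"
          by (rule dim_ge2[OF subspace_V1 X0(1) X1(1) X0nz X1nz]) (use X1 in \<open>simp add: inner_commute\<close>)
        moreover have "2 \<le> dim (V2 :: (real ^ ('n + 'm)) set)"
        proof (rule dim_ge2[OF subspace_V2 Y0U FV1[OF X1(1)]])
          show "Y0 \<noteq> 0" using Y0Y0 mu by auto
          show "F *v X1 \<noteq> 0" by (rule X1(3))
          show "Y0 \<bullet> (F *v X1) = 0" using in1[OF X1(1) X1(2)] by (simp add: inner_commute)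
        qed
        ultimately show ?thesis using d1 d2 assms(5) by linarith
      qed
    qed
  qed
  have H1: "wedge Y Y0 \<in> g" if Y: "Y \<in> V2" "Y \<bullet> Y0 = 0" for Y
  proof -
    have "wedge (F *v Y) X0 \<in> g" using G1 FV2 Y in2 by blast
    then have "- wedge (F *v Y) X0 \<in> g" by (rule g_neg[OF sg])
    then have "wedge X0 (F *v Y) \<in> g" using wedge_swap[of X0 "F *v Y"] by simp
    then have "(wedge X0 (F *v Y) + wedge Y0 Y) - wedge X0 (F *v Y) \<in> g"
      using GY[OF Y(1)] g_diff[OF sg] by blast
    then have "wedge Y0 Y \<in> g" by simp
    then have "- wedge Y0 Y \<in> g" by (rule g_neg[OF sg])
    then show ?thesis using wedge_swap[of Y0 Y] by simp
  qed
  have G2: "wedge X X' \<in> g" if "X \<in> V1" "X' \<in> V1" "X \<bullet> X0 = 0" "X' \<bullet> X0 = 0" for X X'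
  proof -
    have "lie_bracket (wedge X X0) (wedge X' X0) \<in> g" using g_br[OF cg G1 G1] that by blast
    moreover have "lie_bracket (wedge X X0) (wedge X' X0) = wedge X X'"
      using that X0 by (simp add: bracket_wedge inner_commute)
    ultimately show ?thesis by simp
  qed
  have H2: "wedge Y Y' \<in> g" if "Y \<in> V2" "Y' \<in> V2" "Y \<bullet> Y0 = 0" "Y' \<bullet> Y0 = 0" for Y Y'
  proof -
    have "lie_bracket (wedge Y Y0) (wedge Y' Y0) \<in> g" using g_br[OF cg H1 H1] that by blast
    moreover have "lie_bracket (wedge Y Y0) (wedge Y' Y0) = \<mu> *\<^sub>R wedge Y Y'"
      using that Y0Y0 by (simp add: bracket_wedge inner_commute)
    ultimately have "\<mu> *\<^sub>R wedge Y Y' \<in> g" by simp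
    then show ?thesis by (rule g_scale_iff[OF sg, rotated]) (use mu in simp)
  qed
  have W1: "wedge X Y \<in> g" if "X \<in> V1" "Y \<in> V1" for X Y
    by (rule decomp[OF subspace_V1 sg X0(1) X0(2) _ G1 G2 that]) simp
  have W2: "wedge X Y \<in> g" if "X \<in> V2" "Y \<in> V2" for X Y
    by (rule decomp[OF subspace_V2 sg Y0U Y0Y0 mu H1 H2 that])
  have sub2: "so_sum \<subseteq> g" unfolding so_sum_def
    by (rule span_minimal[OF _ sg]) (use W1 W2 in blast)
  show ?thesis using sub1 sub2 g_def by auto
qed


end
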